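(* Let $\mathcal U$ be an unbalanced critical update family and $\mathcal S_U$ as in the context. There is a constant $c>0$ depending only on $\mathcal U$ such that for every $A\subset\mathbb Z^2$ and every $\mathcal S_U$-droplet $D$ internally spanned by $A$, $|D\cap A|\ge c\cdot\operatorname{diam}(D)$.
   Context: Update family $\mathcal U$: finite collection of finite subsets of $\mathbb Z^2\setminus\{0\}$, $A_{t+1}=A_t\cup\{x:x+X\subset A_t,\ X\in\mathcal U\}$, $[A]=\bigcup_tA_t$. $\mathbb H_u(a)=\{x\in\mathbb Z^2:\langle x-a,u\rangle<0\}$, $\mathbb H_u=\mathbb H_u(0)$. For rational $u$, $\alpha^\pm(u)$ is the minimal $|Z|$ with $[\mathbb H_u\cup Z]$ containing infinitely many sites of $\ell_u^\pm$ (origin plus sites of $\{x:\langle x,u\rangle=0\}$ right/left of origin looking in direction $u$); $\bar\alpha(u)=\min\{\alpha^+,\alpha^-\}$; $\alpha(u)=\bar\alpha(u)$ if both finite else $\infty$; $\alpha=\alpha(\mathcal U)=\min$ over open semicircles $C$ of $\sup_{u\in C}\alpha(u)$. Unbalanced critical: $1\le\alpha<\infty$ and no closed semicircle has $\alpha(u)\le\alpha$ throughout. $\mathcal S_U=\{u^*,-u^*,u^l,u^r\}$ is fixed with $u^l,u^r$ in opposite open semicircles separated by $\pm u^*$, $\min\{\alpha(u^* ),\alpha(-u^* )\}\ge\alpha+1$, $\min\{\bar\alpha(u^l),\bar\alpha(u^r)\}=\alpha$. An $\mathcal S_U$-droplet is a non-empty set $\bigcap_{u\in\mathcal S_U}\mathbb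 H_u(a_u)$, $a_u\in\mathbb Z^2$. $\nu=\max\{\|x-y\|:x,y\in X\cup\{0\},X\in\mathcal U\}$, $\kappa=3\nu$; strongly connected means connected in the graph on $\mathbb Z^2$ joining $x,y$ with $\|x-y\|_2\le\kappa$. $D$ is internally spanned by $A$ if some strongly connected $L\subset[D\cap A]$ has $D$ as the smallest $\mathcal S_U$-droplet containing $L$. $\operatorname{diam}(K)=\max\{\|x-y\|:x,y\in K\}$. *)

theory Defs
  imports "HOL-Analysis.Analysis" "HOL-Library.Extended_Nat"
begin

type_synonym pt = "int \<times> int"

definition dot :: "pt \<Rightarrow> pt \<Rightarrow> int" where
  "dot x y = fst x * fst y + snd x * snd y"

definition dotr :: "pt \<Rightarrow> real \<times> real \<Rightarrow> real" where
  "dotr x v = real_of_int (fst x) * fst v + real_of_int (snd x) * snd v"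

(* cross product: positive iff y points to the left of x (counterclockwise) *)
definition cross :: "pt \<Rightarrow> pt \<Rightarrow> int" where
  "cross x y = fst x * snd y - snd x * fst y"

definition eucnorm :: "pt \<Rightarrow> real" where
  "eucnorm x = sqrt (real_of_int (fst x)^2 + real_of_int (snd x)^2)"

definition update_family :: "pt set set \<Rightarrow> bool" where
  "update_family U \<longleftrightarrow> finite U \<and> (\<forall>X\<in>U. finite X \<and> X \<subseteq> UNIV - {0})"

definition bp_step :: "pt set set \<Rightarrow> pt set \<Rightarrow> pt set" where
  "bp_step U A = A \<union> {x. \<exists>X\<in>U. (\<lambda>y. x + y) ` X \<subseteq> A}"

definition bp_closure :: "pt set set \<Rightarrow> pt set \<Rightarrow> pt set" where
  "bp_closure U A = (\<Union>t::nat. (bp_step U ^^ t) A)"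

definition halfplane :: "pt \<Rightarrow> pt \<Rightarrow> pt set" where
  "halfplane u a = {x. dot (x - a) u < 0}"

(* l_u^+ / l_u^- : origin plus sites of the line <x,u>=0 right / left of the
   origin looking in direction u; the right of u=(a,b) is (b,-a) *)
definition line_plus :: "pt \<Rightarrow> pt set" where
  "line_plus u = {x. dot x u = 0 \<and> dot x (snd u, - fst u) \<ge> 0}"

definition line_minus :: "pt \<Rightarrow> pt set" where
  "line_minus u = {x. dot x u = 0 \<and> dot x (snd u, - fst u) \<le> 0}"

definition alpha_plus :: "pt set set \<Rightarrow> pt \<Rightarrow> enat" where
  "alpha_plus U u = Inf {enat (card Z) | Z. finite Z \<and>
      infinite (bp_closure U (halfplane u 0 \<union> Z) \<inter> line_plus u)}"

definition alpha_minus :: "pt set set \<Rightarrow> pt \<Rightarrow> enat" where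
  "alpha_minus U u = Inf {enat (card Z) | Z. finite Z \<and>
      infinite (bp_closure U (halfplane u 0 \<union> Z) \<inter> line_minus u)}"

definition alpha_bar :: "pt set set \<Rightarrow> pt \<Rightarrow> enat" where
  "alpha_bar U u = min (alpha_plus U u) (alpha_minus U u)"

definition alpha_dir :: "pt set set \<Rightarrow> pt \<Rightarrow> enat" where
  "alpha_dir U u = (if alpha_plus U u \<noteq> \<infinity> \<and> alpha_minus U u \<noteq> \<infinity>
                     then alpha_bar U u else \<infinity>)"

(* open semicircles are {u. <u,v> > 0} for v \<noteq> 0; rational directions are
   represented by non-zero integer vectors *)
definition alpha_fam :: "pt set set \<Rightarrow> enat" where
  "alpha_fam U = (INF v\<in>{v::real\<times>real. v \<noteq> 0}.
                   SUP u\<in>{u::pt. u \<noteq> 0 \<and> dotr u v > 0}. alpha_dir U u)"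

definition unbalanced_critical :: "pt set set \<Rightarrow> bool" where
  "unbalanced_critical U \<longleftrightarrow>
     1 \<le> alpha_fam U \<and> alpha_fam U < \<infinity> \<and>
     \<not> (\<exists>v::real\<times>real. v \<noteq> 0 \<and>
          (\<forall>u::pt. u \<noteq> 0 \<and> dotr u v \<ge> 0 \<longrightarrow> alpha_dir U u \<le> alpha_fam U))"

definition is_droplet :: "pt set \<Rightarrow> pt set \<Rightarrow> bool" where
  "is_droplet S D \<longleftrightarrow> D \<noteq> {} \<and> (\<exists>a::pt \<Rightarrow> pt. D = (\<Inter>u\<in>S. halfplane u (a u)))"

definition nu :: "pt set set \<Rightarrow> real" where
  "nu U = Max {eucnorm (x - y) | x y X. X \<in> U \<and> x \<in> insert 0 X \<and> y \<in> insert 0 X}"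

definition kappa :: "pt set set \<Rightarrow> real" where
  "kappa U = 3 * nu U"

definition strongly_connected :: "real \<Rightarrow> pt set \<Rightarrow> bool" where
  "strongly_connected k L \<longleftrightarrow> L \<noteq> {} \<and>
     (\<forall>x\<in>L. \<forall>y\<in>L. (x, y) \<in> {(p, q). p \<in> L \<and> q \<in> L \<and> eucnorm (p - q) \<le> k}\<^sup>*)"

definition smallest_droplet :: "pt set \<Rightarrow> pt set \<Rightarrow> pt set \<Rightarrow> bool" where
  "smallest_droplet S L D \<longleftrightarrow> is_droplet S D \<and> L \<subseteq> D \<and>
     (\<forall>D'. is_droplet S D' \<and> L \<subseteq> D' \<longrightarrow> D \<subseteq> D')"

definition internally_spanned :: "pt set set \<Rightarrow> pt set \<Rightarrow> pt set \<Rightarrow> pt set \<Rightarrow> bool" where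
  "internally_spanned U S D A \<longleftrightarrow>
     (\<exists>L. L \<subseteq> bp_closure U (D \<inter> A) \<and> strongly_connected (kappa U) L \<and>
          smallest_droplet S L D)"

definition diam :: "pt set \<Rightarrow> real" where
  "diam K = Max {eucnorm (x - y) | x y. x \<in> K \<and> y \<in> K}"

end

theory Submission
  imports Defs
begin


definition rv :: "pt \<Rightarrow> real \<times> real" where
  "rv x = (real_of_int (fst x), real_of_int (snd x))"

lemma norm_rv: "norm (rv x) = eucnorm x"
  by (simp add: rv_def eucnorm_def norm_Pair)

lemma norm_pair_eq: "norm (v::real\<times>real) = sqrt ((fst v)^2 + (snd v)^2)"
  by (cases v) (simp add: norm_Pair)

lemma rv_diff[simp]: "rv (x - y) = rv x - rv y"
  by (simp add: rv_def)
lemma rv_add[simp]: "rv (x + y) = rv x + rv y"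
  by (simp add: rv_def)

lemma dotr_diff[simp]: "dotr u (a - b) = dotr u a - dotr u b"
  by (simp add: dotr_def algebra_simps)
lemma dotr_add[simp]: "dotr u (a + b) = dotr u a + dotr u b"
  by (simp add: dotr_def algebra_simps)
lemma dotr_scale[simp]: "dotr u (c *\<^sub>R a) = c * dotr u a"
  by (simp add: dotr_def algebra_simps)
lemma dotr_zero[simp]: "dotr u 0 = 0"
  by (simp add: dotr_def)
lemma dotr_rv: "dotr u (rv x) = real_of_int (dot x u)"
  by (simp add: dotr_def rv_def dot_def algebra_simps)

lemma abs_le_norm1: "\<bar>fst (v::real\<times>real)\<bar> \<le> norm v"
  by (metis norm_fst_le prod.collapse real_norm_def)
lemma abs_le_norm2: "\<bar>snd (v::real\<times>real)\<bar> \<le> norm v"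
  by (metis norm_snd_le prod.collapse real_norm_def)

lemma dotr_bound: "\<bar>dotr u w\<bar> \<le> (\<bar>real_of_int (fst u)\<bar> + \<bar>real_of_int (snd u)\<bar>) * norm w"
proof -
  have "\<bar>dotr u w\<bar> \<le> \<bar>real_of_int (fst u)\<bar> * \<bar>fst w\<bar> + \<bar>real_of_int (snd u)\<bar> * \<bar>snd w\<bar>"
    unfolding dotr_def by (metis abs_mult abs_triangle_ineq)
  also have "\<dots> \<le> \<bar>real_of_int (fst u)\<bar> * norm w + \<bar>real_of_int (snd u)\<bar> * norm w"
    by (intro add_mono mult_left_mono abs_le_norm1 abs_le_norm2) auto
  finally show ?thesis by (simp add: algebra_simps)
qed

lemma cover_lemma:
  assumes H: "\<And>v::real\<times>real. v \<noteq> 0 \<Longrightarrow> \<exists>u. P u \<and> dotr u v > 0"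
  shows "\<exists>S \<delta>. finite S \<and> (\<forall>u\<in>S. P u) \<and> \<delta> > 0 \<and> (\<forall>v. \<exists>u\<in>S. dotr u v \<ge> \<delta> * norm v)"
proof -
  define C where "C = {(u,k::nat). P u}"
  define f where "f = (\<lambda>(u,k::nat). {v::real\<times>real. dotr u v > 1 / (real k + 1)})"
  have opn: "open (f T)" if "T \<in> C" for T
  proof -
    obtain u k where T: "T = (u,k)" by fastforce
    have "continuous_on UNIV (\<lambda>v::real\<times>real. dotr u v)"
      unfolding dotr_def by (intro continuous_intros)
    then show ?thesis unfolding f_def T by (simp add: open_Collect_less)
  qed
  have cov: "sphere (0::real\<times>real) 1 \<subseteq> (\<Union>c\<in>C. f c)"
  proof
    fix v :: "real\<times>real" assume "v \<in> sphere 0 1"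
    then have "v \<noteq> 0" by auto
    then obtain u where u: "P u" "dotr u v > 0" using H by blast
    then obtain n where n: "n > 0" "inverse (real n) < dotr u v" using ex_inverse_of_nat_less by blast
    then obtain k where "n = Suc k" using gr0_conv_Suc by blast
    then have "1 / (real k + 1) < dotr u v" using n by (simp add: field_simps)
    then show "v \<in> (\<Union>c\<in>C. f c)" using u unfolding C_def f_def by (intro UN_I[of "(u,k)"]) auto
  qed
  obtain C' where C': "C' \<subseteq> C" "finite C'" "sphere (0::real\<times>real) 1 \<subseteq> (\<Union>c\<in>C'. f c)"
    using compactE_image[OF compact_sphere opn cov] by blast
  define S where "S = fst ` C'"
  define K where "K = Max (snd ` C')"
  define \<delta> where "\<delta> = 1 / (real K + 1)"
  have C'ne: "C' \<noteq> {}"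
  proof
    assume "C' = {}"
    moreover have "((1::real),(0::real)) \<in> sphere (0::real\<times>real) 1" by (simp add: norm_Pair)
    ultimately show False using C'(3) by auto
  qed
  have sph: "\<exists>u\<in>S. dotr u v \<ge> \<delta>" if "norm v = 1" for v
  proof -
    from that C'(3) obtain u k where uk: "(u,k) \<in> C'" "v \<in> f (u,k)" by auto
    have "k \<le> K" unfolding K_def using uk C'(2) by (metis Max_ge finite_imageI image_eqI snd_conv)
    then have "1 / (real K + 1) \<le> 1 / (real k + 1)" by (simp add: frac_le)
    then show ?thesis using uk unfolding S_def \<delta>_def f_def by (intro bexI[of _ u]) (auto intro: image_eqI[of _ _ "(u,k)"])
  qed
  have "\<forall>v. \<exists>u\<in>S. dotr u v \<ge> \<delta> * norm v"
  proof
    fix v :: "real\<times>real"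
    show "\<exists>u\<in>S. dotr u v \<ge> \<delta> * norm v"
    proof (cases "v = 0")
      case True then show ?thesis using C'ne unfolding S_def by auto
    next
      case False
      then have "norm (v /\<^sub>R norm v) = 1" by simp
      then obtain u where u: "u \<in> S" "dotr u (v /\<^sub>R norm v) \<ge> \<delta>" using sph by blast
      have "v = norm v *\<^sub>R (v /\<^sub>R norm v)" using False by simp
      then have "dotr u v = norm v * dotr u (v /\<^sub>R norm v)" by (metis dotr_scale)
      moreover have "norm v * \<delta> \<le> norm v * dotr u (v /\<^sub>R norm v)" using u(2) by (simp add: mult_left_mono)
      ultimately have "\<delta> * norm v \<le> dotr u v" by (metis mult.commute)
      then show ?thesis using u(1) by blast
    qed
  qed
  moreover have "finite S" "\<forall>u\<in>S. P u" using C' unfolding S_def C_def by auto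
  moreover have "\<delta> > 0" unfolding \<delta>_def by simp
  ultimately show ?thesis by blast
qed



definition stab :: "pt set set \<Rightarrow> pt \<Rightarrow> bool" where
  "stab U u \<longleftrightarrow> (\<forall>X\<in>U. \<exists>y\<in>X. dot y u \<ge> 0)"

lemma line_sub_closure:
  assumes "X \<in> U" "\<forall>y\<in>X. dot y u < 0" "dot x u = 0"
  shows "x \<in> bp_closure U (halfplane u 0 \<union> {})"
proof -
  have "x \<in> bp_step U (halfplane u 0)"
    unfolding bp_step_def using assms
    by (auto simp: halfplane_def dot_def algebra_simps intro!: bexI[of _ X])
  then show ?thesis unfolding bp_closure_def by (intro UN_I[of 1]) auto
qed

lemma alpha_zero:
  assumes "u \<noteq> 0" "X \<in> U" "\<forall>y\<in>X. dot y u < 0"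
  shows "alpha_dir U u = 0"
proof -
  define f where "f = (\<lambda>k::nat. (int k * snd u, - (int k * fst u)))"
  define g where "g = (\<lambda>k::nat. (- (int k * snd u), int k * fst u))"
  have injf: "inj f"
  proof (rule injI)
    fix a b assume "f a = f b"
    then have "int a * snd u = int b * snd u" "int a * fst u = int b * fst u" unfolding f_def by auto
    then show "a = b" using assms(1) by (cases u) (auto simp: zero_prod_def)
  qed
  have injg: "inj g"
  proof (rule injI)
    fix a b assume "g a = g b"
    then have "int a * snd u = int b * snd u" "int a * fst u = int b * fst u" unfolding g_def by auto
    then show "a = b" using assms(1) by (cases u) (auto simp: zero_prod_def)
  qed
  have sq: "0 \<le> int k * (snd u * snd u) + int k * (fst u * fst u)" for k
    by (metis add_nonneg_nonneg mult_nonneg_nonneg of_nat_0_le_iff zero_le_square)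
  have fl: "f k \<in> line_plus u" for k
  proof -
    have "dot (f k) u = 0" by (simp add: f_def dot_def algebra_simps)
    moreover have "dot (f k) (snd u, - fst u) = int k * (snd u * snd u) + int k * (fst u * fst u)"
      by (simp add: f_def dot_def algebra_simps)
    ultimately show ?thesis unfolding line_plus_def using sq[of k] by simp
  qed
  have gl: "g k \<in> line_minus u" for k
  proof -
    have "dot (g k) u = 0" by (simp add: g_def dot_def algebra_simps)
    moreover have "dot (g k) (snd u, - fst u) = - (int k * (snd u * snd u) + int k * (fst u * fst u))"
      by (simp add: g_def dot_def algebra_simps)
    moreover note sq[of k]
    ultimately have "dot (g k) u = 0 \<and> dot (g k) (snd u, - fst u) \<le> 0" by linarith
    then show ?thesis unfolding line_minus_def by simp
  qed
  have fc: "f k \<in> bp_closure U (halfplane u 0 \<union> {})" for k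
    by (rule line_sub_closure[OF assms(2,3)]) (simp add: f_def dot_def algebra_simps)
  have gc: "g k \<in> bp_closure U (halfplane u 0 \<union> {})" for k
    by (rule line_sub_closure[OF assms(2,3)]) (simp add: g_def dot_def algebra_simps)
  have "range f \<subseteq> bp_closure U (halfplane u 0 \<union> {}) \<inter> line_plus u"
    using fl fc by blast
  then have "infinite (bp_closure U (halfplane u 0 \<union> {}) \<inter> line_plus u)"
    using range_inj_infinite[OF injf] finite_subset by blast
  then have p: "alpha_plus U u = 0" unfolding alpha_plus_def
  proof -
    have "enat (card ({}::pt set)) \<in> {enat (card Z) | Z. finite Z \<and> infinite (bp_closure U (halfplane u 0 \<union> Z) \<inter> line_plus u)}"
      using \<open>infinite (bp_closure U (halfplane u 0 \<union> {}) \<inter> line_plus u)\<close> by blast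
    then have "Inf {enat (card Z) | Z. finite Z \<and> infinite (bp_closure U (halfplane u 0 \<union> Z) \<inter> line_plus u)} \<le> 0"
      by (metis (no_types, lifting) Inf_lower card.empty zero_enat_def)
    then show "Inf {enat (card Z) | Z. finite Z \<and> infinite (bp_closure U (halfplane u 0 \<union> Z) \<inter> line_plus u)} = 0" by simp
  qed
  have "range g \<subseteq> bp_closure U (halfplane u 0 \<union> {}) \<inter> line_minus u"
    using gl gc by blast
  then have "infinite (bp_closure U (halfplane u 0 \<union> {}) \<inter> line_minus u)"
    using range_inj_infinite[OF injg] finite_subset by blast
  then have m: "alpha_minus U u = 0" unfolding alpha_minus_def
  proof -
    have "enat (card ({}::pt set)) \<in> {enat (card Z) | Z. finite Z \<and> infinite (bp_closure U (halfplane u 0 \<union> Z) \<inter> line_minus u)}"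
      using \<open>infinite (bp_closure U (halfplane u 0 \<union> {}) \<inter> line_minus u)\<close> by blast
    then have "Inf {enat (card Z) | Z. finite Z \<and> infinite (bp_closure U (halfplane u 0 \<union> Z) \<inter> line_minus u)} \<le> 0"
      by (metis (no_types, lifting) Inf_lower card.empty zero_enat_def)
    then show "Inf {enat (card Z) | Z. finite Z \<and> infinite (bp_closure U (halfplane u 0 \<union> Z) \<inter> line_minus u)} = 0" by simp
  qed
  show ?thesis using p m by (simp add: alpha_dir_def alpha_bar_def)
qed

lemma stab_exists:
  assumes "1 \<le> alpha_fam U" "v \<noteq> 0"
  shows "\<exists>u. (u \<noteq> 0 \<and> stab U u) \<and> dotr u v > 0"
proof (rule ccontr)
  assume N: "\<not> ?thesis"
  have "alpha_fam U \<le> (SUP u\<in>{u::pt. u \<noteq> 0 \<and> dotr u v > 0}. alpha_dir U u)"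
    unfolding alpha_fam_def using assms(2) by (intro INF_lower) auto
  also have "\<dots> \<le> 0"
  proof (rule SUP_least)
    fix u assume u: "u \<in> {u::pt. u \<noteq> 0 \<and> dotr u v > 0}"
    then have "\<not> stab U u" using N by blast
    then obtain X where "X \<in> U" "\<forall>y\<in>X. dot y u < 0" unfolding stab_def by force
    then show "alpha_dir U u \<le> 0" using alpha_zero u by auto
  qed
  finally have "alpha_fam U \<le> 0" .
  then show False using assms(1) by (metis not_one_le_zero order_trans)
qed



definition poly :: "pt set \<Rightarrow> real\<times>real \<Rightarrow> real \<Rightarrow> pt set" where
  "poly S c r = {x. \<forall>u\<in>S. dotr u (rv x - c) \<le> r}"

definition farf :: "pt set \<Rightarrow> real \<Rightarrow> ((real\<times>real)\<times>real) set \<Rightarrow> bool" where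
  "farf S k G \<longleftrightarrow> (\<forall>a\<in>G. \<forall>b\<in>G. a \<noteq> b \<longrightarrow>
      (\<forall>p\<in>poly S (fst a) (snd a). \<forall>q\<in>poly S (fst b) (snd b). eucnorm (p - q) > k))"

definition Phi :: "real \<Rightarrow> ((real\<times>real)\<times>real) set \<Rightarrow> real" where
  "Phi m G = (\<Sum>a\<in>G. snd a + m)"

lemma merge_geom:
  assumes A: "\<And>u w. u \<in> S \<Longrightarrow> norm w \<le> k \<Longrightarrow> dotr u w \<le> m"
    and p: "p \<in> poly S c1 r1" and q: "q \<in> poly S c2 r2" and pq: "eucnorm (p - q) \<le> k"
    and m: "0 \<le> m"
  shows "poly S c1 r1 \<union> poly S c2 r2 \<subseteq> poly S (c1 + c2 - rv q) (r1 + r2 + m)"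
proof
  fix x assume x: "x \<in> poly S c1 r1 \<union> poly S c2 r2"
  show "x \<in> poly S (c1 + c2 - rv q) (r1 + r2 + m)"
    unfolding poly_def mem_Collect_eq
  proof (intro ballI)
    fix u assume u: "u \<in> S"
    have e: "rv x - (c1 + c2 - rv q) = (rv x - c1) + (rv q - c2)"
         "rv x - (c1 + c2 - rv q) = (rv x - c2) + (rv q - rv p) + (rv p - c1)"
      by (simp_all add: algebra_simps)
    have nq: "norm (rv q - rv p) \<le> k" using pq
      by (metis norm_minus_commute norm_rv rv_diff)
    have d: "dotr u (rv q - rv p) \<le> m" using A[OF u nq] .
    have q2: "dotr u (rv q - c2) \<le> r2" using q u unfolding poly_def by auto
    have p1: "dotr u (rv p - c1) \<le> r1" using p u unfolding poly_def by auto
    show "dotr u (rv x - (c1 + c2 - rv q)) \<le> r1 + r2 + m"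
    proof (cases "x \<in> poly S c1 r1")
      case True
      then have "dotr u (rv x - c1) \<le> r1" using u unfolding poly_def by auto
      then show ?thesis unfolding e(1) dotr_add using q2 m by linarith
    next
      case False
      then have "dotr u (rv x - c2) \<le> r2" using x u unfolding poly_def by auto
      then show ?thesis unfolding e(2) dotr_add using d p1 by linarith
    qed
  qed
qed

lemma merge_all:
  assumes A: "\<And>u w. u \<in> S \<Longrightarrow> norm w \<le> k \<Longrightarrow> dotr u w \<le> m" and m: "0 \<le> m"
  shows "finite F \<Longrightarrow> \<forall>a\<in>F. snd a \<ge> 0 \<Longrightarrow> \<exists>G. finite G \<and> (\<forall>a\<in>G. snd a \<ge> 0) \<and>
     (\<forall>a\<in>F. poly S (fst a) (snd a) \<subseteq> (\<Union>b\<in>G. poly S (fst b) (snd b))) \<and>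
     Phi m G \<le> Phi m F \<and> farf S k G"
proof (induction "card F" arbitrary: F rule: less_induct)
  case less
  show ?case
  proof (cases "farf S k F")
    case True
    then show ?thesis using less.prems by blast
  next
    case False
    obtain a b p q where ab: "a \<in> F" "b \<in> F" "a \<noteq> b" and p: "p \<in> poly S (fst a) (snd a)"
      and q: "q \<in> poly S (fst b) (snd b)" and pq: "eucnorm (p - q) \<le> k"
    proof -
      from False have "\<exists>a\<in>F. \<exists>b\<in>F. a \<noteq> b \<and> (\<exists>p\<in>poly S (fst a) (snd a). \<exists>q\<in>poly S (fst b) (snd b). \<not> eucnorm (p - q) > k)"
        unfolding farf_def by blast
      then show ?thesis using that by (meson not_less)
    qed
    define new where "new = (fst a + fst b - rv q, snd a + snd b + m)"
    define F' where "F' = insert new (F - {a, b})"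
    have fin': "finite F'" unfolding F'_def using less.prems by auto
    have fr0: "finite (F - {a,b})" using less.prems by auto
    have c1: "card (F - {a,b}) = card F - 2" using ab less.prems(1) by (simp add: card_Diff_subset)
    have "card {a,b} \<le> card F" using ab less.prems(1) by (intro card_mono) auto
    then have c2: "card F \<ge> 2" using ab by simp
    have c3: "card F' \<le> Suc (card (F - {a,b}))" unfolding F'_def using fr0 by (simp add: card_insert_if)
    have card': "card F' < card F" using c1 c2 c3 by linarith
    have nn': "\<forall>a\<in>F'. snd a \<ge> 0" unfolding F'_def new_def using less.prems(2) ab m by auto
    obtain G where G: "finite G" "\<forall>a\<in>G. snd a \<ge> 0"
      "\<forall>a\<in>F'. poly S (fst a) (snd a) \<subseteq> (\<Union>b\<in>G. poly S (fst b) (snd b))"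
      "Phi m G \<le> Phi m F'" "farf S k G"
      using less.hyps[OF card' fin' nn'] by blast
    have sub: "poly S (fst a) (snd a) \<union> poly S (fst b) (snd b) \<subseteq> poly S (fst new) (snd new)"
      unfolding new_def using merge_geom[OF A p q pq m] by simp
    have cov: "\<forall>c\<in>F. poly S (fst c) (snd c) \<subseteq> (\<Union>b\<in>G. poly S (fst b) (snd b))"
    proof
      fix c assume c: "c \<in> F"
      show "poly S (fst c) (snd c) \<subseteq> (\<Union>b\<in>G. poly S (fst b) (snd b))"
      proof (cases "c = a \<or> c = b")
        case True
        then have "poly S (fst c) (snd c) \<subseteq> poly S (fst new) (snd new)" using sub by auto
        moreover have "new \<in> F'" unfolding F'_def by simp
        ultimately show ?thesis using G(3) by blast
      next
        case False
        then have "c \<in> F'" unfolding F'_def using c by auto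
        then show ?thesis using G(3) by blast
      qed
    qed
    have fr: "finite (F - {a,b})" using less.prems by auto
    have PhiF: "Phi m F = Phi m (F - {a,b}) + (snd a + m) + (snd b + m)"
    proof -
      have "Phi m F = (snd a + m) + Phi m (F - {a})" unfolding Phi_def
        using sum.remove[OF less.prems(1) ab(1)] by simp
      moreover have "Phi m (F - {a}) = (snd b + m) + Phi m (F - {a} - {b})" unfolding Phi_def
        using sum.remove[of "F - {a}" b] less.prems(1) ab by simp
      moreover have "F - {a} - {b} = F - {a,b}" by auto
      ultimately show ?thesis by simp
    qed
    have "Phi m F' \<le> Phi m (F - {a,b}) + (snd new + m)"
    proof (cases "new \<in> F - {a,b}")
      case True
      then have "F' = F - {a,b}" unfolding F'_def by auto
      moreover have "snd new + m \<ge> 0" unfolding new_def using less.prems(2) ab m by force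
      ultimately show ?thesis by simp
    next
      case False
      then show ?thesis unfolding F'_def Phi_def using fr by simp
    qed
    then have "Phi m F' \<le> Phi m F" unfolding PhiF new_def by simp
    then show ?thesis using G cov by (meson order_trans)
  qed
qed



lemma closure_sub:
  assumes "bp_step U W \<subseteq> W" "B \<subseteq> W"
  shows "bp_closure U B \<subseteq> W"
proof -
  have "(bp_step U ^^ t) B \<subseteq> W" for t
  proof (induction t)
    case 0 then show ?case using assms(2) by simp
  next
    case (Suc t)
    have "bp_step U ((bp_step U ^^ t) B) \<subseteq> bp_step U W"
      using Suc unfolding bp_step_def by blast
    then show ?case using assms(1) by simp
  qed
  then show ?thesis unfolding bp_closure_def by blast
qed

lemma closure_empty:
  assumes "\<forall>X\<in>U. X \<noteq> {}"
  shows "bp_closure U {} = {}"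
proof -
  have "bp_step U {} \<subseteq> {}" unfolding bp_step_def using assms by auto
  then show ?thesis using closure_sub[of U "{}" "{}"] by auto
qed

lemma poly_closed:
  assumes "\<forall>u\<in>S. stab U u" "x \<notin> poly S c r" "X \<in> U"
  shows "\<exists>y\<in>X. x + y \<notin> poly S c r"
proof -
  obtain u where u: "u \<in> S" "dotr u (rv x - c) > r" using assms(2) unfolding poly_def by force
  obtain y where y: "y \<in> X" "dot y u \<ge> 0" using assms(1,3) u(1) unfolding stab_def by blast
  have "dotr u (rv (x + y) - c) = dotr u (rv x - c) + dotr u (rv y)" by (simp add: algebra_simps)
  also have "dotr u (rv y) = real_of_int (dot y u)" by (rule dotr_rv)
  finally have "dotr u (rv (x + y) - c) > r" using u(2) y(2) by linarith
  then show ?thesis using y(1) u(1) unfolding poly_def by force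
qed

lemma nu_bound:
  assumes "update_family U" "X \<in> U" "y \<in> X" "z \<in> X"
  shows "eucnorm (y - z) \<le> nu U"
proof -
  let ?T = "{eucnorm (x - y) | x y X. X \<in> U \<and> x \<in> insert 0 X \<and> y \<in> insert 0 X}"
  have "?T \<subseteq> (\<lambda>(x,y). eucnorm (x - y)) ` (\<Union>X\<in>U. insert 0 X \<times> insert 0 X)" by fastforce
  moreover have "finite (\<Union>X\<in>U. insert 0 X \<times> insert 0 X)"
    using assms(1) unfolding update_family_def by auto
  ultimately have "finite ?T" using finite_subset by blast
  moreover have "eucnorm (y - z) \<in> ?T" using assms by blast
  ultimately show ?thesis unfolding nu_def by (rule Max_ge)
qed

lemma eucnorm_nonneg: "eucnorm x \<ge> 0" unfolding eucnorm_def by simp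

lemma step_closed:
  assumes uf: "update_family U" and st: "\<forall>u\<in>S. stab U u" and ne: "\<forall>X\<in>U. X \<noteq> {}"
    and far: "farf S (kappa U) G"
  shows "bp_step U (\<Union>b\<in>G. poly S (fst b) (snd b)) \<subseteq> (\<Union>b\<in>G. poly S (fst b) (snd b))"
proof
  let ?W = "\<Union>b\<in>G. poly S (fst b) (snd b)"
  fix x assume "x \<in> bp_step U ?W"
  then consider "x \<in> ?W" | X where "X \<in> U" "(\<lambda>y. x + y) ` X \<subseteq> ?W" unfolding bp_step_def by blast
  then show "x \<in> ?W"
  proof cases
    case 1 then show ?thesis .
  next
    case 2
    obtain y0 where y0: "y0 \<in> X" using ne 2(1) by blast
    obtain a where a: "a \<in> G" "x + y0 \<in> poly S (fst a) (snd a)" using 2(2) y0 by blast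
    have "x + y \<in> poly S (fst a) (snd a)" if y: "y \<in> X" for y
    proof -
      obtain b where b: "b \<in> G" "x + y \<in> poly S (fst b) (snd b)" using 2(2) y by blast
      have "eucnorm ((x + y0) - (x + y)) = eucnorm (y0 - y)" by (simp add: algebra_simps)
      also have "\<dots> \<le> nu U" using nu_bound[OF uf 2(1) y0 y] .
      also have "\<dots> \<le> kappa U" unfolding kappa_def using nu_bound[OF uf 2(1) y0 y0] eucnorm_nonneg[of "y0 - y0"] by linarith
      finally have "\<not> eucnorm ((x + y0) - (x + y)) > kappa U" by simp
      then have "a = b" using far a b unfolding farf_def by blast
      then show ?thesis using b by simp
    qed
    then have "x \<in> poly S (fst a) (snd a)" using poly_closed[OF st _ 2(1)] by blast
    then show ?thesis using a(1) by blast
  qed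
qed

lemma conn_in_one:
  assumes far: "farf S k G" and LW: "L \<subseteq> (\<Union>b\<in>G. poly S (fst b) (snd b))"
    and sc: "strongly_connected k L" and x0: "x0 \<in> L" "x0 \<in> poly S (fst a) (snd a)" and a: "a \<in> G"
  shows "L \<subseteq> poly S (fst a) (snd a)"
proof
  fix y assume y: "y \<in> L"
  let ?R = "{(p, q). p \<in> L \<and> q \<in> L \<and> eucnorm (p - q) \<le> k}"
  have "(x0, y) \<in> ?R\<^sup>*" using sc x0(1) y unfolding strongly_connected_def by blast
  then show "y \<in> poly S (fst a) (snd a)"
  proof (induction rule: rtrancl_induct)
    case base then show ?case using x0 by simp
  next
    case (step p q)
    then have q: "q \<in> L" "eucnorm (p - q) \<le> k" by auto
    obtain b where b: "b \<in> G" "q \<in> poly S (fst b) (snd b)" using LW q(1) by blast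
    have "a = b" using far a b step.IH q(2) unfolding farf_def by force
    then show ?case using b by simp
  qed
qed



lemma finite_ball: "finite {x::pt. norm (rv x) \<le> K}"
proof -
  have "{x::pt. norm (rv x) \<le> K} \<subseteq> {-\<lceil>K\<rceil>..\<lceil>K\<rceil>} \<times> {-\<lceil>K\<rceil>..\<lceil>K\<rceil>}"
  proof
    fix x :: pt assume "x \<in> {x. norm (rv x) \<le> K}"
    then have "\<bar>real_of_int (fst x)\<bar> \<le> K" "\<bar>real_of_int (snd x)\<bar> \<le> K"
      using abs_le_norm1[of "rv x"] abs_le_norm2[of "rv x"] by (auto simp: rv_def)
    then have "\<bar>fst x\<bar> \<le> \<lceil>K\<rceil>" "\<bar>snd x\<bar> \<le> \<lceil>K\<rceil>" by (metis ceiling_mono ceiling_of_int of_int_abs)+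
    then show "x \<in> {-\<lceil>K\<rceil>..\<lceil>K\<rceil>} \<times> {-\<lceil>K\<rceil>..\<lceil>K\<rceil>}" by (cases x) auto
  qed
  then show ?thesis using finite_subset by blast
qed

lemma dotr_neg: "dotr (- u) v = - dotr u v" by (simp add: dotr_def)

lemma cover_SU:
  assumes "us \<noteq> 0" "cross us ul > 0" "cross us ur < 0" "v \<noteq> 0"
  shows "\<exists>u. u \<in> {us, - us, ul, ur} \<and> dotr u v > 0"
proof -
  define a where "a = real_of_int (fst us)"
  define b where "b = real_of_int (snd us)"
  define v1 where "v1 = fst v"
  define v2 where "v2 = snd v"
  define d where "d = a * v1 + b * v2"
  define w where "w = a * v2 - b * v1"
  have dd: "dotr us v = d" unfolding d_def a_def b_def v1_def v2_def dotr_def by simp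
  have ab: "a^2 + b^2 > 0" using assms(1) unfolding a_def b_def
    by (cases us) (auto simp: zero_prod_def add_pos_nonneg sum_power2_gt_zero_iff)
  have iden: "(a^2 + b^2) * dotr u v = real_of_int (cross us u) * w + (a * real_of_int (fst u) + b * real_of_int (snd u)) * d" for u
    unfolding dotr_def cross_def w_def d_def a_def b_def v1_def v2_def by (simp add: algebra_simps power2_eq_square)
  show ?thesis
  proof (cases "d > 0")
    case True then show ?thesis using dd by (intro exI[of _ us]) auto
  next
    case F1: False
    show ?thesis
    proof (cases "d < 0")
      case True then show ?thesis using dd by (intro exI[of _ "- us"]) (auto simp: dotr_neg)
    next
      case False
      then have d0: "d = 0" using F1 by simp
      have "w \<noteq> 0"
      proof
        assume w0: "w = 0"
        have "(a^2 + b^2) * v1 = a * d - b * w" "(a^2 + b^2) * v2 = b * d + a * w"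
          unfolding d_def w_def by (simp_all add: algebra_simps power2_eq_square)
        then have "v1 = 0" "v2 = 0" using d0 w0 ab by auto
        then show False using assms(4) unfolding v1_def v2_def by (cases v) (auto simp: zero_prod_def)
      qed
      then consider "w > 0" | "w < 0" by linarith
      then show ?thesis
      proof cases
        case 1
        have "(a^2 + b^2) * dotr ul v > 0" using iden[of ul] d0 1 assms(2) by simp
        then have "dotr ul v > 0" using ab by (simp add: zero_less_mult_iff)
        then show ?thesis by blast
      next
        case 2
        have "(a^2 + b^2) * dotr ur v > 0" using iden[of ur] d0 2 assms(3) by (simp add: mult_neg_neg)
        then have "dotr ur v > 0" using ab by (simp add: zero_less_mult_iff)
        then show ?thesis by blast
      qed
    qed
  qed
qed



lemma dot_diff: "dot (x - y) u = dot x u - dot y u" by (simp add: dot_def algebra_simps)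

lemma dot_self_ge1: "u \<noteq> 0 \<Longrightarrow> dot u u \<ge> 1"
proof -
  assume "u \<noteq> 0"
  then have "fst u \<noteq> 0 \<or> snd u \<noteq> 0" by (cases u) (auto simp: zero_prod_def)
  moreover have sq1: "a * a \<ge> 1" if "a \<noteq> 0" for a :: int
  proof -
    have "\<bar>a\<bar> \<ge> 1" using that by linarith
    then have "\<bar>a\<bar> * \<bar>a\<bar> \<ge> 1 * 1" by (intro mult_mono) auto
    then show ?thesis by (simp add: abs_mult_self_eq)
  qed
  ultimately have "fst u * fst u \<ge> 1 \<or> snd u * snd u \<ge> 1" by blast
  moreover have "fst u * fst u \<ge> 0" "snd u * snd u \<ge> 0" by auto
  ultimately show ?thesis unfolding dot_def by linarith
qed

lemma dot_self_nonneg: "dot u u \<ge> 0" unfolding dot_def by simp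

theorem mainTheorem10:
  fixes U :: "pt set set" and us ul ur :: pt
  assumes "update_family U"
    and "unbalanced_critical U"
    and "us \<noteq> 0" and "ul \<noteq> 0" and "ur \<noteq> 0"
    and "cross us ul > 0" and "cross us ur < 0"
    and "min (alpha_dir U us) (alpha_dir U (- us)) \<ge> alpha_fam U + 1"
    and "min (alpha_bar U ul) (alpha_bar U ur) = alpha_fam U"
  shows "\<exists>c>0. \<forall>A D. internally_spanned U {us, - us, ul, ur} D A \<longrightarrow>
           real (card (D \<inter> A)) \<ge> c * diam D"
proof -
  note uf = assms(1)
  have a1: "1 \<le> alpha_fam U" using assms(2) unfolding unbalanced_critical_def by blast
  obtain S1 \<delta>1 where S1: "finite S1" "\<forall>u\<in>S1. u \<noteq> 0 \<and> stab U u" "\<delta>1 > 0"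
    "\<forall>v. \<exists>u\<in>S1. dotr u v \<ge> \<delta>1 * norm v"
    using cover_lemma[of "\<lambda>u. u \<noteq> 0 \<and> stab U u"] stab_exists[OF a1] by blast
  define SU where "SU = {us, - us, ul, ur}"
  obtain S2 \<delta>2 where S2: "finite S2" "\<forall>u\<in>S2. u \<in> SU" "\<delta>2 > 0"
    "\<forall>v. \<exists>u\<in>S2. dotr u v \<ge> \<delta>2 * norm v"
    using cover_lemma[of "\<lambda>u. u \<in> SU"] cover_SU[OF assms(3,6,7)] unfolding SU_def by blast
  have finSU: "finite SU" unfolding SU_def by simp
  have SUnz: "\<forall>u\<in>SU. u \<noteq> 0" unfolding SU_def using assms(3,4,5) by auto
  have stS1: "\<forall>u\<in>S1. stab U u" using S1(2) by blast
  obtain u1 where "u1 \<in> S1" using S1(4) by blast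
  then have ne: "\<forall>X\<in>U. X \<noteq> {}" using S1(2) unfolding stab_def by blast
  define M1 where "M1 = (\<Sum>u\<in>S1. \<bar>real_of_int (fst u)\<bar> + \<bar>real_of_int (snd u)\<bar>)"
  define M2 where "M2 = (\<Sum>u\<in>SU. \<bar>real_of_int (fst u)\<bar> + \<bar>real_of_int (snd u)\<bar>)"
  define N2 where "N2 = (\<Sum>u\<in>SU. dot u u)"
  define m where "m = max 0 (kappa U) * M1"
  have M1ge: "\<bar>real_of_int (fst u)\<bar> + \<bar>real_of_int (snd u)\<bar> \<le> M1" if "u \<in> S1" for u
    unfolding M1_def using S1(1) that by (intro member_le_sum) auto
  have M2ge: "\<bar>real_of_int (fst u)\<bar> + \<bar>real_of_int (snd u)\<bar> \<le> M2" if "u \<in> SU" for u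
    unfolding M2_def using finSU that by (intro member_le_sum) auto
  have N2ge: "dot u u \<le> N2" if "u \<in> SU" for u
    unfolding N2_def using finSU that dot_self_nonneg by (intro member_le_sum) auto
  have M1nn: "M1 \<ge> 0" using M1ge \<open>u1 \<in> S1\<close> by (meson abs_ge_zero add_nonneg_nonneg order_trans)
  have M2nn: "M2 \<ge> 0" using M2ge[of us] unfolding SU_def by (meson abs_ge_zero add_nonneg_nonneg order_trans insertI1)
  have N2nn: "N2 \<ge> 0" using N2ge[of us] dot_self_nonneg[of us] unfolding SU_def by auto
  have mnn: "m \<ge> 0" unfolding m_def using M1nn by simp
  have A1: "dotr u w \<le> m" if "u \<in> S1" "norm w \<le> kappa U" for u w
  proof -
    have "dotr u w \<le> (\<bar>real_of_int (fst u)\<bar> + \<bar>real_of_int (snd u)\<bar>) * norm w" using dotr_bound[of u w] by linarith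
    also have "\<dots> \<le> M1 * max 0 (kappa U)"
      using M1ge[OF that(1)] that(2) by (intro mult_mono) auto
    finally show ?thesis unfolding m_def by (simp add: mult.commute)
  qed
  define \<alpha> where "\<alpha> = 4 * N2 * m * M2 / (\<delta>1 * \<delta>2)"
  define \<beta> where "\<beta> = 4 * N2 / \<delta>2"
  have \<alpha>nn: "\<alpha> \<ge> 0" unfolding \<alpha>_def using N2nn mnn M2nn S1(3) S2(3) by simp
  have \<beta>nn: "\<beta> \<ge> 0" unfolding \<beta>_def using N2nn S2(3) by simp
  define c where "c = 1 / (\<alpha> + \<beta> + 1)"
  have cpos: "c > 0" unfolding c_def using \<alpha>nn \<beta>nn by simp
  have main: "real (card (D \<inter> A)) \<ge> c * diam D" if isp: "internally_spanned U SU D A" for A D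
  proof -
    obtain L where L: "L \<subseteq> bp_closure U (D \<inter> A)" "strongly_connected (kappa U) L" "smallest_droplet SU L D"
      using isp unfolding internally_spanned_def by blast
    have LD: "L \<subseteq> D" and Dmin: "\<And>D'. is_droplet SU D' \<Longrightarrow> L \<subseteq> D' \<Longrightarrow> D \<subseteq> D'"
      and Ddr: "is_droplet SU D"
      using L(3) unfolding smallest_droplet_def by auto
    obtain ad where ad: "D = (\<Inter>u\<in>SU. halfplane u (ad u))" using Ddr unfolding is_droplet_def by blast
    define T where "T = (\<Sum>u\<in>SU. \<bar>dot (ad u) u\<bar>)"
    have finD: "finite D"
    proof -
      have "D \<subseteq> {x. norm (rv x) \<le> T / \<delta>2}"
      proof
        fix x assume x: "x \<in> D"
        obtain u where u: "u \<in> S2" "dotr u (rv x) \<ge> \<delta>2 * norm (rv x)" using S2(4) by blast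
        have uSU: "u \<in> SU" using u(1) S2(2) by blast
        have "dot (x - ad u) u < 0" using x uSU unfolding ad halfplane_def by blast
        then have "dot x u < dot (ad u) u" by (simp add: dot_diff)
        moreover have "\<bar>dot (ad u) u\<bar> \<le> T" unfolding T_def using finSU uSU
          by (intro member_le_sum) auto
        moreover have "dot (ad u) u \<le> \<bar>dot (ad u) u\<bar>" by simp
        ultimately have "real_of_int (dot x u) \<le> T" by linarith
        then have "\<delta>2 * norm (rv x) \<le> T" using u(2) dotr_rv[of u x] by linarith
        then show "x \<in> {x. norm (rv x) \<le> T / \<delta>2}" using S2(3) by (simp add: field_simps)
      qed
      then show ?thesis using finite_ball finite_subset by blast
    qed
    define B where "B = D \<inter> A"
    have finB: "finite B" unfolding B_def using finD by simp
    define F0 where "F0 = (\<lambda>b. (rv b, 0::real)) ` B"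
    obtain G where G: "finite G" "\<forall>a\<in>G. snd a \<ge> 0"
      "\<forall>a\<in>F0. poly S1 (fst a) (snd a) \<subseteq> (\<Union>b\<in>G. poly S1 (fst b) (snd b))"
      "Phi m G \<le> Phi m F0" "farf S1 (kappa U) G"
      using merge_all[where S=S1 and k="kappa U" and m=m and F=F0, OF A1 mnn] finB unfolding F0_def by auto
    define W where "W = (\<Union>b\<in>G. poly S1 (fst b) (snd b))"
    have BW: "B \<subseteq> W"
    proof
      fix b assume b: "b \<in> B"
      have "b \<in> poly S1 (rv b) 0" unfolding poly_def by simp
      then show "b \<in> W" using G(3) b unfolding W_def F0_def by force
    qed
    have LW: "L \<subseteq> W" using closure_sub[OF step_closed[OF uf stS1 ne G(5)] BW[unfolded W_def]] L(1)
      unfolding W_def B_def by blast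
    obtain x0 where x0: "x0 \<in> L" using L(2) unfolding strongly_connected_def by blast
    have Bne: "B \<noteq> {}"
    proof
      assume "B = {}"
      then have "L = {}" using L(1) closure_empty[OF ne] unfolding B_def by auto
      then show False using x0 by simp
    qed
    define n where "n = card B"
    have n1: "real n \<ge> 1" unfolding n_def using Bne finB by (simp add: Suc_leI card_gt_0_iff)
    obtain a where a: "a \<in> G" "x0 \<in> poly S1 (fst a) (snd a)" using LW x0 unfolding W_def by blast
    have La: "L \<subseteq> poly S1 (fst a) (snd a)" using conn_in_one[OF G(5) LW[unfolded W_def] L(2) x0 a(2) a(1)] .
    have "snd a + m \<le> Phi m G" unfolding Phi_def using G(1,2) a(1) mnn
      by (intro member_le_sum) auto
    also have "\<dots> \<le> Phi m F0" by (rule G(4))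
    also have "Phi m F0 = (\<Sum>a\<in>F0. m)" unfolding Phi_def by (rule sum.cong) (auto simp: F0_def)
    also have "\<dots> = m * real (card F0)" by simp
    also have "\<dots> \<le> m * real n" unfolding n_def F0_def using mnn finB
      by (intro mult_left_mono) (auto simp: card_image_le)
    finally have ra: "snd a \<le> m * real n" using mnn by linarith
    define R2 where "R2 = 2 * m * real n / \<delta>1"
    have Lnear: "norm (rv x - fst a) \<le> m * real n / \<delta>1" if "x \<in> L" for x
    proof -
      obtain u where u: "u \<in> S1" "dotr u (rv x - fst a) \<ge> \<delta>1 * norm (rv x - fst a)" using S1(4) by blast
      have "dotr u (rv x - fst a) \<le> snd a" using La that u(1) unfolding poly_def by blast
      then have "\<delta>1 * norm (rv x - fst a) \<le> m * real n" using u(2) ra by linarith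
      then show ?thesis using S1(3) by (simp add: field_simps)
    qed
    have Lnear2: "norm (rv x - rv x0) \<le> R2" if "x \<in> L" for x
    proof -
      have "rv x - rv x0 = (rv x - fst a) - (rv x0 - fst a)" by simp
      then have "norm (rv x - rv x0) \<le> norm (rv x - fst a) + norm (rv x0 - fst a)"
        by (metis norm_triangle_ineq4)
      moreover have "R2 = m * real n / \<delta>1 + m * real n / \<delta>1" unfolding R2_def by simp
      ultimately show ?thesis using Lnear[OF that] Lnear[OF x0] by linarith
    qed
    define t :: int where "t = \<lceil>R2 * M2\<rceil> + 1"
    have tge: "real_of_int t > R2 * M2" unfolding t_def by linarith
    have tle: "real_of_int t \<le> R2 * M2 + 2" unfolding t_def by linarith
    have R2nn: "R2 \<ge> 0" unfolding R2_def using mnn S1(3) by simp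
    have "R2 * M2 \<ge> 0" using R2nn M2nn by simp
    then have "real_of_int t > 0" using tge by linarith
    then have tpos: "t \<ge> 1" by simp
    define a' where "a' = (\<lambda>u::pt. x0 + (t * fst u, t * snd u))"
    define D' where "D' = (\<Inter>u\<in>SU. halfplane u (a' u))"
    have dota': "dot (x - a' u) u = dot (x - x0) u - t * dot u u" for x u
      unfolding a'_def dot_def by (simp add: algebra_simps)
    have LD': "L \<subseteq> D'"
    proof
      fix x assume x: "x \<in> L"
      show "x \<in> D'" unfolding D'_def halfplane_def
      proof (intro InterI, clarsimp)
        fix u assume u: "u \<in> SU"
        have "real_of_int (dot (x - x0) u) = dotr u (rv x - rv x0)" by (metis dotr_rv rv_diff)
        also have "\<dots> \<le> (\<bar>real_of_int (fst u)\<bar> + \<bar>real_of_int (snd u)\<bar>) * norm (rv x - rv x0)"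
          using dotr_bound[of u "rv x - rv x0"] by linarith
        also have "\<dots> \<le> M2 * R2" using M2ge[OF u] Lnear2[OF x] M2nn by (intro mult_mono) auto
        also have "\<dots> < real_of_int t" using tge by (simp add: mult.commute)
        finally have "dot (x - x0) u < t" by linarith
        moreover have "t \<le> t * dot u u" using dot_self_ge1[of u] SUnz u tpos by simp
        ultimately show "dot (x - a' u) u < 0" unfolding dota' by linarith
      qed
    qed
    have "is_droplet SU D'" unfolding is_droplet_def using LD' x0 D'_def by blast
    then have DD': "D \<subseteq> D'" using Dmin LD' by blast
    define Rb where "Rb = real_of_int t * N2 / \<delta>2"
    have Dnear: "norm (rv x - rv x0) \<le> Rb" if "x \<in> D" for x
    proof -
      obtain u where u: "u \<in> S2" "dotr u (rv x - rv x0) \<ge> \<delta>2 * norm (rv x - rv x0)" using S2(4) by blast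
      have uSU: "u \<in> SU" using u(1) S2(2) by blast
      have "dot (x - a' u) u < 0" using DD' that uSU unfolding D'_def halfplane_def by blast
      then have "dot (x - x0) u < t * dot u u" unfolding dota' by linarith
      also have "t * dot u u \<le> t * N2" using N2ge[OF uSU] tpos by simp
      finally have "dot (x - x0) u \<le> t * N2" by simp
      then have "real_of_int (dot (x - x0) u) \<le> real_of_int t * real_of_int N2"
        by (simp only: of_int_mult[symmetric] of_int_le_iff)
      moreover have "real_of_int (dot (x - x0) u) = dotr u (rv x - rv x0)" by (metis dotr_rv rv_diff)
      ultimately have "\<delta>2 * norm (rv x - rv x0) \<le> real_of_int t * N2" using u(2) by linarith
      then show ?thesis unfolding Rb_def using S2(3) by (simp add: field_simps)
    qed
    have diamb: "diam D \<le> 2 * Rb"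
    proof -
      let ?T = "{eucnorm (x - y) | x y. x \<in> D \<and> y \<in> D}"
      have "?T \<subseteq> (\<lambda>(x,y). eucnorm (x - y)) ` (D \<times> D)" by fastforce
      then have finT: "finite ?T" using finD finite_subset by blast
      have neT: "?T \<noteq> {}" using x0 LD by blast
      have "\<forall>z\<in>?T. z \<le> 2 * Rb"
      proof
        fix z assume "z \<in> ?T"
        then obtain x y where xy: "z = eucnorm (x - y)" "x \<in> D" "y \<in> D" by blast
        have "rv x - rv y = (rv x - rv x0) - (rv y - rv x0)" by simp
        then have "norm (rv x - rv y) \<le> norm (rv x - rv x0) + norm (rv y - rv x0)"
          by (metis norm_triangle_ineq4)
        moreover have "z = norm (rv x - rv y)" using xy(1) norm_rv[of "x - y"] by simp
        ultimately show "z \<le> 2 * Rb" using Dnear[OF xy(2)] Dnear[OF xy(3)] by linarith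
      qed
      then show ?thesis unfolding diam_def using finT neT by (simp add: Max_le_iff)
    qed
    have "2 * Rb \<le> 2 * ((R2 * M2 + 2) * N2 / \<delta>2)"
    proof -
      have "real_of_int t * N2 \<le> (R2 * M2 + 2) * N2" using tle N2nn by (intro mult_right_mono) auto
      then have "real_of_int t * N2 / \<delta>2 \<le> (R2 * M2 + 2) * N2 / \<delta>2" using S2(3) by (intro divide_right_mono) auto
      then show ?thesis unfolding Rb_def by linarith
    qed
    also have "\<dots> = \<alpha> * real n + \<beta>" unfolding \<alpha>_def \<beta>_def R2_def using S1(3) S2(3)
      by (simp add: field_simps)
    also have "\<dots> \<le> (\<alpha> + \<beta>) * real n"
    proof -
      have "\<beta> * 1 \<le> \<beta> * real n" using n1 \<beta>nn by (rule mult_left_mono)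
      then show ?thesis by (simp add: distrib_right)
    qed
    finally have "diam D \<le> (\<alpha> + \<beta>) * real n" using diamb by linarith
    then have "c * diam D \<le> c * ((\<alpha> + \<beta>) * real n)" using cpos by (simp add: mult_left_mono)
    also have "\<dots> \<le> real n" unfolding c_def using \<alpha>nn \<beta>nn n1 by (simp add: field_simps)
    finally show ?thesis unfolding n_def B_def .
  qed
  show ?thesis using cpos main unfolding SU_def by blast
qed

end
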